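(* The function $R:\Sigma^n\to\Sigma^n$ is bijective.
   Context: Let $k\ge 2$, $\Sigma=\{0,\dots,k-1\}$ with arithmetic modulo $k$, $n\ge 1$, and $s=s[0]\cdots s[n-1]\in\Sigma^n$. For an integer $j$, $ICR_j(s)=s[1]\cdots s[n-1](s[0]+j)$; each $ICR_j$ is a bijection of $\Sigma^n$. Let $\mathbf N$ be the set of cycles (orbits) of the permutation $ICR_1$ of $\Sigma^n$; $orbit(s)$ is the cycle containing $s$. Let $\mathbf G$ be the directed graph on $\mathbf N$ with an arc $(\mathcal U,\mathcal V)$ iff some $s\in\mathcal U$ has $ICR_0(s)\in\mathcal V$. Let $\mathbf T$ be a directed spanning tree of $\mathbf G$ rooted at $\mathcal R\in\mathbf N$ (arcs from parent to child), with parent map $parent$ on $\mathbf N\setminus\{\mathcal R\}$; the depth of a cycle is its distance from the root (root has depth $0$). For each $\mathcal U\ne\mathcal R$, a representative $rep(\mathcal U)$ is a fixed node $s\in\mathcal U$ with $ICR_0^{-1}(s)\in parent(\mathcal U)$ and $s[n-1]\equiv \text{depth}(\mathcal U)\pmod k$ (such a node is assumed to exist and one is fixed). $\mathrm{Reps}$ is the set of all representatives. Define $R(s)=ICR_0(s)$ if $ICR_0(s)\in\mathrm{Reps}$; $R(s)=ICR_2(s)$ if $ICR_1(s)\in\mathrm{Reps}$; $R(s)=ICR_1(s)$ otherwise (these cases do not conflict). *)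

theory Defs
  imports Main
begin

definition strings :: "nat \<Rightarrow> nat \<Rightarrow> nat list set" where
  "strings k n = {s. length s = n \<and> set s \<subseteq> {0..<k}}"

definition ICR :: "nat \<Rightarrow> int \<Rightarrow> nat list \<Rightarrow> nat list" where
  "ICR k j s = tl s @ [nat ((int (hd s) + j) mod int k)]"

definition orbit :: "nat \<Rightarrow> nat list \<Rightarrow> nat list set" where
  "orbit k s = {((ICR k 1) ^^ m) s | m. True}"

definition cycles :: "nat \<Rightarrow> nat \<Rightarrow> nat list set set" where
  "cycles k n = orbit k ` strings k n"

definition G_arc :: "nat \<Rightarrow> nat \<Rightarrow> nat list set \<Rightarrow> nat list set \<Rightarrow> bool" where
  "G_arc k n U V \<longleftrightarrow> U \<in> cycles k n \<and> V \<in> cycles k n \<and> (\<exists>s\<in>U. ICR k 0 s \<in> V)"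

definition spanning_tree :: "nat \<Rightarrow> nat \<Rightarrow> nat list set \<Rightarrow> (nat list set \<Rightarrow> nat list set) \<Rightarrow> bool" where
  "spanning_tree k n root par \<longleftrightarrow>
     root \<in> cycles k n \<and>
     (\<forall>U \<in> cycles k n - {root}. par U \<in> cycles k n \<and> G_arc k n (par U) U) \<and>
     (\<forall>U \<in> cycles k n. \<exists>m. (par ^^ m) U = root)"

definition depth :: "nat list set \<Rightarrow> (nat list set \<Rightarrow> nat list set) \<Rightarrow> nat list set \<Rightarrow> nat" where
  "depth root par U = (LEAST m. (par ^^ m) U = root)"

definition valid_reps :: "nat \<Rightarrow> nat \<Rightarrow> nat list set \<Rightarrow> (nat list set \<Rightarrow> nat list set)
    \<Rightarrow> (nat list set \<Rightarrow> nat list) \<Rightarrow> bool" where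
  "valid_reps k n root par rep \<longleftrightarrow>
     (\<forall>U \<in> cycles k n - {root}.
        rep U \<in> U \<and> (\<exists>t \<in> par U. ICR k 0 t = rep U) \<and>
        last (rep U) mod k = depth root par U mod k)"

definition Reps :: "nat \<Rightarrow> nat \<Rightarrow> nat list set \<Rightarrow> (nat list set \<Rightarrow> nat list) \<Rightarrow> nat list set" where
  "Reps k n root rep = rep ` (cycles k n - {root})"

definition Rmap :: "nat \<Rightarrow> nat \<Rightarrow> nat list set \<Rightarrow> (nat list set \<Rightarrow> nat list) \<Rightarrow> nat list \<Rightarrow> nat list" where
  "Rmap k n root rep s =
     (if ICR k 0 s \<in> Reps k n root rep then ICR k 0 s
      else if ICR k 1 s \<in> Reps k n root rep then ICR k 2 s
      else ICR k 1 s)"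

end

theory Submission imports Defs begin

lemma ICR_nat:
  assumes "s \<noteq> []" "hd s < k"
  shows "ICR k (int j) s = tl s @ [(hd s + j) mod k]"
proof -
  have "(int (hd s) + int j) mod int k = int ((hd s + j) mod k)" by (simp add: zmod_int)
  then show ?thesis by (simp add: ICR_def)
qed

lemma ICR0: "s \<noteq> [] \<Longrightarrow> hd s < k \<Longrightarrow> ICR k 0 s = tl s @ [hd s]"
  using ICR_nat[of s k 0] by simp
lemma ICR1: "s \<noteq> [] \<Longrightarrow> hd s < k \<Longrightarrow> ICR k 1 s = tl s @ [(hd s + 1) mod k]"
  using ICR_nat[of s k 1] by simp
lemma ICR2: "s \<noteq> [] \<Longrightarrow> hd s < k \<Longrightarrow> ICR k 2 s = tl s @ [(hd s + 2) mod k]"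
  using ICR_nat[of s k 2] by simp

lemma strings_ne: "s \<in> strings k n \<Longrightarrow> n \<ge> 1 \<Longrightarrow> s \<noteq> [] \<and> hd s < k"
  by (cases s) (auto simp: strings_def)

lemma ICR_strings:
  assumes "s \<in> strings k n" "n \<ge> 1" "k \<ge> 1"
  shows "ICR k j s \<in> strings k n"
proof -
  have "s \<noteq> []" using strings_ne assms by blast
  then show ?thesis using assms
    by (cases s) (auto simp: strings_def ICR_def nat_less_iff)
qed

lemma funpow_strings:
  assumes "s \<in> strings k n" "n \<ge> 1" "k \<ge> 1"
  shows "((ICR k 1) ^^ m) s \<in> strings k n"
  by (induction m) (use assms ICR_strings in auto)

lemma ICR1_inj:
  assumes "s \<in> strings k n" "t \<in> strings k n" "n \<ge> 1" "ICR k 1 s = ICR k 1 t"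
  shows "s = t"
proof -
  have a: "s \<noteq> []" "hd s < k" "t \<noteq> []" "hd t < k" using strings_ne assms by blast+
  have e: "tl s = tl t" "(hd s + 1) mod k = (hd t + 1) mod k"
    using assms(4) by (auto simp: ICR1[OF a(1,2)] ICR1[OF a(3,4)])
  moreover have "hd s = hd t"
  proof -
    have "(hd s + 1) mod k = (if hd s + 1 < k then hd s + 1 else 0)"
      using a by (auto simp: mod_if)
    moreover have "(hd t + 1) mod k = (if hd t + 1 < k then hd t + 1 else 0)"
      using a by (auto simp: mod_if)
    ultimately show ?thesis using e a by (auto split: if_splits)
  qed
  ultimately show ?thesis using a by (metis list.collapse)
qed

lemma funpow_inj:
  assumes "x \<in> strings k n" "y \<in> strings k n" "n \<ge> 1" "k \<ge> 1"
    "((ICR k 1) ^^ i) x = ((ICR k 1) ^^ i) y"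
  shows "x = y"
  using assms(5)
proof (induction i)
  case 0 then show ?case by simp
next
  case (Suc i)
  have "ICR k 1 (((ICR k 1) ^^ i) x) = ICR k 1 (((ICR k 1) ^^ i) y)" using Suc.prems by simp
  then have "((ICR k 1) ^^ i) x = ((ICR k 1) ^^ i) y"
    by (rule ICR1_inj[OF funpow_strings[OF assms(1,3,4)] funpow_strings[OF assms(2,3,4)] assms(3)])
  then show ?case by (rule Suc.IH)
qed

lemma finite_strings: "finite (strings k n)"
proof -
  have "strings k n = {xs. set xs \<subseteq> {0..<k} \<and> length xs = n}" by (auto simp: strings_def)
  then show ?thesis using finite_lists_length_eq[of "{0..<k}" n] by simp
qed

lemma periodic:
  assumes "s \<in> strings k n" "n \<ge> 1" "k \<ge> 1"
  shows "\<exists>p>0. ((ICR k 1) ^^ p) s = s"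
proof -
  define g where "g m = ((ICR k 1) ^^ m) s" for m
  define N where "N = card (strings k n)"
  have sub: "g ` {0..N} \<subseteq> strings k n" using funpow_strings[OF assms] unfolding g_def by auto
  have "\<not> inj_on g {0..N}"
  proof
    assume "inj_on g {0..N}"
    then have "card (g ` {0..N}) = Suc N" by (simp add: card_image)
    moreover have "card (g ` {0..N}) \<le> N" using card_mono[OF finite_strings sub] by (simp add: N_def)
    ultimately show False by simp
  qed
  then obtain i j where ij0: "i \<noteq> j" "g i = g j"
    unfolding inj_on_def by blast
  obtain i j where ij: "i < j" "g i = g j"
  proof (cases "i < j")
    case True then show ?thesis using that ij0 by blast
  next
    case False then have "j < i" using ij0(1) by simp
    then show ?thesis using that ij0(2) by metis
  qed
  have "g j = ((ICR k 1) ^^ i) (((ICR k 1) ^^ (j - i)) s)"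
    unfolding g_def using ij(1) funpow_add[of i "j - i" "ICR k 1"] by simp
  then have "((ICR k 1) ^^ i) s = ((ICR k 1) ^^ i) (((ICR k 1) ^^ (j - i)) s)"
    using ij(2) unfolding g_def by simp
  then have "s = ((ICR k 1) ^^ (j - i)) s"
    by (rule funpow_inj[OF assms(1) funpow_strings[OF assms] assms(2,3)])
  then show ?thesis using ij by (intro exI[of _ "j - i"]) auto
qed

lemma funpow_period: "(f ^^ p) x = x \<Longrightarrow> (f ^^ (p * q)) x = x"
  by (induction q) (auto simp: funpow_add)

lemma orbit_eq:
  assumes "s \<in> strings k n" "n \<ge> 1" "k \<ge> 1" "t \<in> orbit k s"
  shows "orbit k t = orbit k s"
proof -
  obtain i where i: "t = ((ICR k 1) ^^ i) s" using assms(4) by (auto simp: orbit_def)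
  obtain p where p: "p > 0" "((ICR k 1) ^^ p) s = s" using periodic[OF assms(1-3)] by blast
  have pi: "((ICR k 1) ^^ (p * i)) s = s" using funpow_period[OF p(2)] .
  show ?thesis
  proof
    show "orbit k t \<subseteq> orbit k s"
    proof
      fix x assume "x \<in> orbit k t"
      then obtain m where "x = ((ICR k 1) ^^ m) t" by (auto simp: orbit_def)
      then have "x = ((ICR k 1) ^^ (m + i)) s" using i by (simp add: funpow_add)
      then show "x \<in> orbit k s" by (auto simp: orbit_def)
    qed
  next
    show "orbit k s \<subseteq> orbit k t"
    proof
      fix x assume "x \<in> orbit k s"
      then obtain m where m: "x = ((ICR k 1) ^^ m) s" by (auto simp: orbit_def)
      have "x = ((ICR k 1) ^^ m) (((ICR k 1) ^^ (p * i)) s)" using m pi by simp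
      also have "\<dots> = ((ICR k 1) ^^ (m + p * i)) s" by (simp add: funpow_add)
      also have "m + p * i = (m + p * i - i) + i"
      proof -
        obtain q where "p = Suc q" using p(1) by (cases p) auto
        then show ?thesis by simp
      qed
      also have "((ICR k 1) ^^ ((m + p * i - i) + i)) s = ((ICR k 1) ^^ (m + p * i - i)) t"
        using i by (simp add: funpow_add)
      finally show "x \<in> orbit k t" by (auto simp: orbit_def)
    qed
  qed
qed


lemma cycle_orbit:
  assumes "U \<in> cycles k n" "x \<in> U" "n \<ge> 1" "k \<ge> 1"
  shows "U = orbit k x" "x \<in> strings k n" "ICR k 1 x \<in> U"
proof -
  obtain s0 where s0: "s0 \<in> strings k n" "U = orbit k s0" using assms(1) by (auto simp: cycles_def)
  show 1: "U = orbit k x" using orbit_eq[OF s0(1) assms(3,4)] assms(2) s0(2) by simp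
  show "x \<in> strings k n" using assms(2) s0 funpow_strings[OF s0(1) assms(3,4)] by (auto simp: orbit_def)
  have "ICR k 1 x = ((ICR k 1) ^^ 1) x" by simp
  then show "ICR k 1 x \<in> U" using 1 unfolding orbit_def by blast
qed

lemma depth_Suc:
  assumes "spanning_tree k n root par" "U \<in> cycles k n" "U \<noteq> root"
  shows "depth root par U = Suc (depth root par (par U))"
proof -
  obtain m where m: "(par ^^ m) U = root" using assms(1,2) by (auto simp: spanning_tree_def)
  have "(LEAST m. (par ^^ m) U = root) = Suc (LEAST m. (par ^^ Suc m) U = root)"
    by (rule Least_Suc[where P="\<lambda>m. (par ^^ m) U = root", OF m]) (use assms(3) in simp)
  moreover have "\<And>m. (par ^^ Suc m) U = (par ^^ m) (par U)" by (simp only: funpow_Suc_right comp_def)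
  ultimately show ?thesis by (simp add: depth_def)
qed

lemma key:
  assumes "k \<ge> 2" "n \<ge> 1" "spanning_tree k n root par" "valid_reps k n root par rep"
    "w @ [a] \<in> Reps k n root rep" "w @ [(a + 1) mod k] \<in> Reps k n root rep" "a < k"
  shows "k = 2"
proof -
  have k1: "k \<ge> 1" using assms(1) by simp
  obtain U where Um: "U \<in> cycles k n - {root}" and Ur: "w @ [a] = rep U"
    using assms(5) unfolding Reps_def by (rule imageE)
  obtain V where Vm: "V \<in> cycles k n - {root}" and Vr: "w @ [(a + 1) mod k] = rep V"
    using assms(6) unfolding Reps_def by (rule imageE)
  have U: "U \<in> cycles k n" "U \<noteq> root" "rep U = w @ [a]" using Um Ur by auto
  have V: "V \<in> cycles k n" "V \<noteq> root" "rep V = w @ [(a + 1) mod k]" using Vm Vr by auto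
  have vr: "\<forall>U \<in> cycles k n - {root}.
        rep U \<in> U \<and> (\<exists>t \<in> par U. ICR k 0 t = rep U) \<and>
        last (rep U) mod k = depth root par U mod k"
    using assms(4) unfolding valid_reps_def .
  have VR: "rep V \<in> V" "last (rep V) mod k = depth root par V mod k"
    using bspec[OF vr Vm] by auto
  have UR: "last (rep U) mod k = depth root par U mod k"
    "\<exists>t \<in> par U. ICR k 0 t = rep U"
    using bspec[OF vr Um] by auto
  then obtain t where t: "t \<in> par U" "ICR k 0 t = w @ [a]" using U(3) by auto
  have st: "\<forall>U \<in> cycles k n - {root}. par U \<in> cycles k n \<and> G_arc k n (par U) U"
    using assms(3) unfolding spanning_tree_def by blast
  have pU: "par U \<in> cycles k n" using bspec[OF st Um] by blast
  have ts: "t \<in> strings k n" using cycle_orbit(2)[OF pU t(1) assms(2) k1] .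
  have tn: "t \<noteq> []" "hd t < k" using strings_ne[OF ts assms(2)] by auto
  have "tl t = w" "hd t = a" using t(2) ICR0[OF tn] by auto
  then have "ICR k 1 t = rep V" using ICR1[OF tn] V by simp
  moreover have "ICR k 1 t \<in> par U" using cycle_orbit(3)[OF pU t(1) assms(2) k1] .
  ultimately have "par U = V"
    using cycle_orbit(1)[OF pU _ assms(2) k1, of "ICR k 1 t"] cycle_orbit(1)[OF V(1) VR(1) assms(2) k1]
    by simp
  then have d: "depth root par U = Suc (depth root par V)"
    using depth_Suc[OF assms(3) U(1,2)] by simp
  define D where "D = depth root par V"
  have e1: "a = Suc D mod k" using UR(1) U(3) d assms(7) by (simp add: D_def)
  have e2: "(a + 1) mod k = D mod k" using VR(2) V(3) by (simp add: D_def)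
  have "(D + 2) mod k = D mod k" using mod_add_left_eq[of "Suc D" k 1] e1 e2 by simp
  then have "k dvd (D + 2) - D" by (subst (asm) mod_eq_dvd_iff_nat) auto
  then have "k dvd 2" by simp
  then show ?thesis using assms(1) dvd_imp_le[of k 2] by simp
qed

lemma g_inj:
  fixes P :: "nat \<Rightarrow> bool"
  assumes "k \<ge> 2" "\<forall>x<k. P x \<and> P ((x + 1) mod k) \<longrightarrow> k = 2" "a1 < k" "a2 < k"
    "(if P a1 then a1 else if P ((a1+1) mod k) then (a1+2) mod k else (a1+1) mod k) =
     (if P a2 then a2 else if P ((a2+1) mod k) then (a2+2) mod k else (a2+1) mod k)"
  shows "a1 = a2"
proof -
  define N where "N x = (x + 1) mod k" for x
  have N2: "\<And>x. (x + 2) mod k = N (N x)"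
    unfolding N_def by (metis mod_add_left_eq add.assoc one_add_one)
  have Nlt: "\<And>x. N x < k" unfolding N_def using assms(1) by simp
  have Ninj: "\<And>x y. x < k \<Longrightarrow> y < k \<Longrightarrow> N x = N y \<Longrightarrow> x = y"
    unfolding N_def by (auto simp: mod_if split: if_splits)
  have e: "(if P a1 then a1 else if P (N a1) then N (N a1) else N a1) =
     (if P a2 then a2 else if P (N a2) then N (N a2) else N a2)"
    using assms(5) unfolding N2 unfolding N_def by simp
  have i2: "\<And>x y. x < k \<Longrightarrow> y < k \<Longrightarrow> N (N x) = N (N y) \<Longrightarrow> x = y"
    using Ninj Nlt by blast
  show ?thesis
  proof (cases "k = 2")
    case True
    have N0: "N 0 = 1" "N 1 = 0" unfolding N_def True by simp_all
    show ?thesis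
    proof (rule ccontr)
      assume ne: "a1 \<noteq> a2"
      have "(a1 = 0 \<and> a2 = 1) \<or> (a1 = 1 \<and> a2 = 0)" using ne assms(3,4) True by auto
      then have h: "N a1 = a2" "N a2 = a1" using N0 by auto
      show False using e ne unfolding h by (auto split: if_splits)
    qed
  next
  case False
  then have k3: "k \<ge> 3" using assms(1) by simp
  have np: "\<And>x. x < k \<Longrightarrow> P x \<Longrightarrow> \<not> P (N x)" using assms(2) False unfolding N_def by blast
  let ?g = "\<lambda>a. (if P a then a else if P (N a) then N (N a) else N a)"
  have one: "x = y" if xy: "x < k" "y < k" "P x" "?g x = ?g y" for x y
  proof -
    have g1: "x = ?g y" using xy by simp
    show ?thesis
    proof (cases "P y")
      case True then show ?thesis using g1 by simp
    next
      case F2: False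
      show ?thesis
      proof (cases "P (N y)")
        case True then have "x = N (N y)" using g1 F2 by simp
        then show ?thesis using np[OF Nlt[of y] True] xy(3) by simp
      next
        case False then have "x = N y" using g1 F2 by simp
        then show ?thesis using False xy(3) by simp
      qed
    qed
  qed
  show ?thesis
  proof (cases "P a1")
    case True then show ?thesis using one[OF assms(3,4)] e by simp
  next
    case F1: False
    show ?thesis
    proof (cases "P a2")
      case True then show ?thesis using one[OF assms(4,3)] e by simp
    next
      case F2: False
      show ?thesis
      proof (cases "P (N a1)")
        case T1: True
        show ?thesis
        proof (cases "P (N a2)")
          case True
          then have "N (N a1) = N (N a2)" using e F1 F2 T1 by simp
          then show ?thesis using i2 assms(3,4) by blast
        next
          case False
          then have "N (N a1) = N a2" using e F1 F2 T1 by simp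
          then have "N a1 = a2" using Ninj[OF Nlt[of a1] assms(4)] by blast
          then show ?thesis using T1 F2 by simp
        qed
      next
        case NF1: False
        show ?thesis
        proof (cases "P (N a2)")
          case True
          then have "N a1 = N (N a2)" using e F1 F2 NF1 by simp
          then have "a1 = N a2" using Ninj[OF assms(3) Nlt[of a2]] by blast
          then show ?thesis using True F1 by simp
        next
          case False
          then have "N a1 = N a2" using e F1 F2 NF1 by simp
          then show ?thesis using Ninj assms(3,4) by blast
        qed
      qed
    qed
  qed
qed
qed

theorem lemma10:
  fixes k n :: nat and root :: "nat list set"
    and par :: "nat list set \<Rightarrow> nat list set" and rep :: "nat list set \<Rightarrow> nat list"
  assumes "k \<ge> 2" and "n \<ge> 1"
    and "spanning_tree k n root par"
    and "valid_reps k n root par rep"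
  shows "bij_betw (Rmap k n root rep) (strings k n) (strings k n)"
proof -
  have k1: "k \<ge> 1" using assms(1) by simp
  let ?R = "Reps k n root rep"
  have form: "Rmap k n root rep s = tl s @ [(if tl s @ [hd s] \<in> ?R then hd s
      else if tl s @ [(hd s + 1) mod k] \<in> ?R then (hd s + 2) mod k else (hd s + 1) mod k)]"
    if "s \<in> strings k n" for s
  proof -
    have a: "s \<noteq> []" "hd s < k" using strings_ne[OF that assms(2)] by auto
    show ?thesis unfolding Rmap_def ICR0[OF a] ICR1[OF a] ICR2[OF a] by simp
  qed
  have maps: "Rmap k n root rep ` strings k n \<subseteq> strings k n"
    unfolding Rmap_def using ICR_strings[OF _ assms(2) k1] by auto
  have inj: "inj_on (Rmap k n root rep) (strings k n)"
  proof (rule inj_onI)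
    fix s t assume st: "s \<in> strings k n" "t \<in> strings k n" "Rmap k n root rep s = Rmap k n root rep t"
    have a: "s \<noteq> []" "hd s < k" using strings_ne[OF st(1) assms(2)] by auto
    have b: "t \<noteq> []" "hd t < k" using strings_ne[OF st(2) assms(2)] by auto
    have tl: "tl s = tl t" using st form by simp
    define w where "w = tl s"
    define P where "P x = (w @ [x] \<in> ?R)" for x
    have kP: "\<forall>x<k. P x \<and> P ((x + 1) mod k) \<longrightarrow> k = 2"
      unfolding P_def using key[OF assms] by blast
    have "(if P (hd s) then hd s else if P ((hd s+1) mod k) then (hd s+2) mod k else (hd s+1) mod k) =
     (if P (hd t) then hd t else if P ((hd t+1) mod k) then (hd t+2) mod k else (hd t+1) mod k)"
      using st form tl unfolding P_def w_def by simp
    then have "hd s = hd t" using g_inj[OF assms(1) kP a(2) b(2)] by blast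
    then show "s = t" using tl a b by (metis list.collapse)
  qed
  show ?thesis unfolding bij_betw_def using inj endo_inj_surj[OF finite_strings maps inj] by simp
qed

end
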